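(* Fix a start pose $\mathbf{p}_0=(x_0,y_0,\theta_0)$ and CCC inputs $\mathbf{u}_i=(v_i,\omega_i)$, $i=1,2,3$, with $v_i>0$, $\omega_i\neq0$, $\operatorname{sign}\omega_1\neq\operatorname{sign}\omega_2$, $\operatorname{sign}\omega_2\neq\operatorname{sign}\omega_3$. A pose $\mathbf{p}_f=(x_f,y_f,\theta_f)$ is reachable from $\mathbf{p}_0$ by the CCC path with these inputs if and only if $$r_{31}^2\ \le\ (x_f-c)^2+(y_f-d)^2\ \le\ (r_{12}-r_{23})^2,$$ where $c=x_0-r_1\sin\theta_0+r_3\sin\theta_f$ and $d=y_0+r_1\cos\theta_0-r_3\cos\theta_f$.
   Context: A pose is $\mathbf{p}=(x,y,\theta)$, heading understood modulo $2\pi$. An input is $\mathbf{u}=(v,\omega)$. The motion primitive $\mathrm{M}_{\mathbf{u},\tau}$ maps $(x,y,\theta)$ to: if $\omega\neq0$, $\big(x-\frac{v}{\omega}(\sin\theta-\sin(\theta+\omega\tau)),\ y+\frac{v}{\omega}(\cos\theta-\cos(\theta+\omega\tau)),\ \theta+\omega\tau\big)$; if $\omega=0$, $(x+v\tau\cos\theta,\ y+v\tau\sin\theta,\ \theta)$. For a fixed path type with fixed inputs $\mathbf{u}_1,\mathbf{u}_2,\mathbf{u}_3$, a pose $\mathbf{p}_f$ is reachable from $\mathbf{p}_0$ if there exist durations $\tau_1,\tau_2,\tau_3\ge0$, with $|\omega_i\tau_i|<2\pi$ for each turning segment, such that $\mathrm{M}_{\mathbf{u}_3,\tau_3}(\mathrm{M}_{\mathbf{u}_2,\tau_2}(\mathrm{M}_{\mathbf{u}_1,\tau_1}(\mathbf{p}_0)))$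 has position $(x_f,y_f)$ and heading congruent to $\theta_f$ modulo $2\pi$. Notation: $r_i=v_i/\omega_i$, $r_{ij}=r_i-r_j$. *)

theory Defs
  imports Complex_Main
begin

type_synonym pose = "real \<times> real \<times> real"   (* (x, y, theta) *)
type_synonym input = "real \<times> real"          (* (v, omega) *)

definition motion :: "input \<Rightarrow> real \<Rightarrow> pose \<Rightarrow> pose" where
  "motion u \<tau> p = (let (v, \<omega>) = u; (x, y, \<theta>) = p in
     if \<omega> \<noteq> 0 then
       (x - v / \<omega> * (sin \<theta> - sin (\<theta> + \<omega> * \<tau>)),
        y + v / \<omega> * (cos \<theta> - cos (\<theta> + \<omega> * \<tau>)),
        \<theta> + \<omega> * \<tau>)
     else (x + v * \<tau> * cos \<theta>, y + v * \<tau> * sin \<theta>, \<theta>))"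

definition admissible_dur :: "input \<Rightarrow> real \<Rightarrow> bool" where
  "admissible_dur u \<tau> \<longleftrightarrow> \<tau> \<ge> 0 \<and> (snd u \<noteq> 0 \<longrightarrow> \<bar>snd u * \<tau>\<bar> < 2 * pi)"

definition reachable3 :: "input \<Rightarrow> input \<Rightarrow> input \<Rightarrow> pose \<Rightarrow> pose \<Rightarrow> bool" where
  "reachable3 u1 u2 u3 p0 pf \<longleftrightarrow>
     (\<exists>\<tau>1 \<tau>2 \<tau>3. admissible_dur u1 \<tau>1 \<and> admissible_dur u2 \<tau>2 \<and> admissible_dur u3 \<tau>3 \<and>
        (let q = motion u3 \<tau>3 (motion u2 \<tau>2 (motion u1 \<tau>1 p0)) in
           fst q = fst pf \<and> fst (snd q) = fst (snd pf) \<and>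
           (\<exists>k::int. snd (snd q) = snd (snd pf) + 2 * pi * of_int k)))"

end

theory Submission
  imports Defs
begin

lemma per: "sin (x + 2*pi*of_int k) = sin x \<and> cos (x + 2*pi*of_int k) = cos x"
  using sin_cos_eq_iff by blast

lemma angle_reach:
  fixes \<omega> \<theta> \<phi> :: real assumes "\<omega> \<noteq> 0"
  shows "\<exists>\<tau> (k::int). \<tau> \<ge> 0 \<and> \<bar>\<omega>*\<tau>\<bar> < 2*pi \<and> \<theta> + \<omega>*\<tau> = \<phi> + 2*pi*of_int k"
proof (cases "\<omega> > 0")
  case True
  define k where "k = \<lfloor>(\<phi>-\<theta>)/(2*pi)\<rfloor>"
  define s where "s = (\<phi>-\<theta>) - 2*pi*of_int k"
  have a: "of_int k \<le> (\<phi>-\<theta>)/(2*pi)" "(\<phi>-\<theta>)/(2*pi) < of_int k + 1" unfolding k_def by linarith+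
  have "2*pi*of_int k \<le> \<phi>-\<theta>" using a(1) pi_gt_zero by (simp add: field_simps)
  moreover have "\<phi>-\<theta> < 2*pi*(of_int k + 1)" using a(2) pi_gt_zero by (simp add: field_simps)
  ultimately have s: "0 \<le> s" "s < 2*pi" unfolding s_def by (auto simp: algebra_simps)
  show ?thesis
    apply (rule exI[of _ "s/\<omega>"], rule exI[of _ "-k"])
    using s True by (auto simp: s_def)
next
  case False
  with assms have w: "\<omega> < 0" by simp
  define k where "k = \<lfloor>(\<theta>-\<phi>)/(2*pi)\<rfloor>"
  define s where "s = (\<theta>-\<phi>) - 2*pi*of_int k"
  have a: "of_int k \<le> (\<theta>-\<phi>)/(2*pi)" "(\<theta>-\<phi>)/(2*pi) < of_int k + 1" unfolding k_def by linarith+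
  have "2*pi*of_int k \<le> \<theta>-\<phi>" using a(1) pi_gt_zero by (simp add: field_simps)
  moreover have "\<theta>-\<phi> < 2*pi*(of_int k + 1)" using a(2) pi_gt_zero by (simp add: field_simps)
  ultimately have s: "0 \<le> s" "s < 2*pi" unfolding s_def by (auto simp: algebra_simps)
  show ?thesis
    apply (rule exI[of _ "s/(-\<omega>)"], rule exI[of _ "k"])
    using s w by (auto simp: s_def divide_nonneg_neg)
qed

lemma exist_angles:
  fixes a b P Q :: real
  assumes ab: "a*b < 0" and lo: "(a+b)^2 \<le> P^2+Q^2" and hi: "P^2+Q^2 \<le> (a-b)^2"
  shows "\<exists>\<phi> \<psi>. a*cos \<phi> + b*cos \<psi> = P \<and> a*sin \<phi> + b*sin \<psi> = Q"
proof -
  define t where "t = (P^2+Q^2-a^2-b^2)/(2*a*b)"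
  have t1: "t \<le> 1" using ab lo unfolding t_def by (simp add: divide_le_eq_1 power2_eq_square algebra_simps)
  have t2: "-1 \<le> t" using ab hi unfolding t_def by (simp add: le_divide_eq power2_eq_square algebra_simps)
  define \<delta> where "\<delta> = arccos t"
  have cd: "cos \<delta> = t" using t1 t2 by (simp add: \<delta>_def)
  define W1 where "W1 = a + b*cos \<delta>"
  define W2 where "W2 = - b*sin \<delta>"
  have Wn: "W1^2 + W2^2 = P^2+Q^2"
  proof -
    have sc: "sin \<delta> * sin \<delta> = 1 - cos \<delta> * cos \<delta>"
      using sin_cos_squared_add[of \<delta>] by (simp add: power2_eq_square)
    have "W1^2+W2^2 = a^2 + b^2 + 2*a*b*cos \<delta>"
      unfolding W1_def W2_def by (simp add: power2_eq_square algebra_simps sc)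
    also have "\<dots> = P^2+Q^2" using ab by (auto simp: cd t_def)
    finally show ?thesis .
  qed
  have key: "\<And>\<phi>. a*cos \<phi> + b*cos (\<phi>-\<delta>) = cos \<phi>*W1 - sin \<phi>*W2 \<and> a*sin \<phi> + b*sin (\<phi>-\<delta>) = sin \<phi>*W1 + cos \<phi>*W2"
    by (simp add: W1_def W2_def cos_diff sin_diff algebra_simps)
  show ?thesis
  proof (cases "P^2+Q^2 = 0")
    case True
    then have "P = 0" "Q = 0" by (simp_all add: sum_power2_eq_zero_iff)
    moreover have "W1 = 0" "W2 = 0" using Wn True by (simp_all add: sum_power2_eq_zero_iff)
    ultimately show ?thesis using key[of 0] by (intro exI[of _ 0] exI[of _ "0-\<delta>"]) simp
  next
    case False
    define \<rho> where "\<rho> = sqrt (P^2+Q^2)"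
    have rp: "\<rho> > 0" using False unfolding \<rho>_def by (simp add: add_nonneg_nonneg sum_power2_ge_zero order_le_neq_trans)
    have r2: "\<rho>^2 = P^2+Q^2" unfolding \<rho>_def by simp
    have "(P/\<rho>)^2 + (Q/\<rho>)^2 = 1" using rp by (simp add: power_divide add_divide_distrib[symmetric] r2[symmetric])
    then obtain \<beta> where b: "P/\<rho> = cos \<beta>" "Q/\<rho> = sin \<beta>" using sincos_total_2pi by metis
    have "(W1/\<rho>)^2 + (W2/\<rho>)^2 = 1" using rp by (simp add: power_divide add_divide_distrib[symmetric] Wn r2[symmetric])
    then obtain \<alpha> where al: "W1/\<rho> = cos \<alpha>" "W2/\<rho> = sin \<alpha>" using sincos_total_2pi by metis
    have P: "P = \<rho>*cos \<beta>" "Q = \<rho>*sin \<beta>" "W1 = \<rho>*cos \<alpha>" "W2 = \<rho>*sin \<alpha>"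
      using b al rp by (simp_all add: divide_eq_eq mult.commute)
    have "cos (\<beta>-\<alpha>)*W1 - sin (\<beta>-\<alpha>)*W2 = \<rho>*cos (\<beta>-\<alpha>+\<alpha>)"
      by (simp only: P cos_add) (simp add: algebra_simps)
    moreover have "sin (\<beta>-\<alpha>)*W1 + cos (\<beta>-\<alpha>)*W2 = \<rho>*sin (\<beta>-\<alpha>+\<alpha>)"
      by (simp only: P sin_add) (simp add: algebra_simps)
    ultimately show ?thesis using key[of "\<beta>-\<alpha>"] P by auto
  qed
qed


lemma motion_turn: "\<omega> \<noteq> 0 \<Longrightarrow> motion (v,\<omega>) \<tau> (x,y,\<theta>) =
   (x - v / \<omega> * (sin \<theta> - sin (\<theta> + \<omega> * \<tau>)),
    y + v / \<omega> * (cos \<theta> - cos (\<theta> + \<omega> * \<tau>)), \<theta> + \<omega> * \<tau>)"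
  by (simp add: motion_def)

theorem theorem2:
  fixes x0 y0 \<theta>0 xf yf \<theta>f v1 \<omega>1 v2 \<omega>2 v3 \<omega>3 :: real
  assumes "v1 > 0" "v2 > 0" "v3 > 0"
    and "\<omega>1 \<noteq> 0" "\<omega>2 \<noteq> 0" "\<omega>3 \<noteq> 0"
    and "sgn \<omega>1 \<noteq> sgn \<omega>2" "sgn \<omega>2 \<noteq> sgn \<omega>3"
  defines "r1 \<equiv> v1 / \<omega>1" and "r2 \<equiv> v2 / \<omega>2" and "r3 \<equiv> v3 / \<omega>3"
  defines "c \<equiv> x0 - r1 * sin \<theta>0 + r3 * sin \<theta>f"
    and "d \<equiv> y0 + r1 * cos \<theta>0 - r3 * cos \<theta>f"
  shows "reachable3 (v1, \<omega>1) (v2, \<omega>2) (v3, \<omega>3) (x0, y0, \<theta>0) (xf, yf, \<theta>f) \<longleftrightarrow>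
           (r3 - r1)^2 \<le> (xf - c)^2 + (yf - d)^2 \<and>
           (xf - c)^2 + (yf - d)^2 \<le> ((r1 - r2) - (r2 - r3))^2"
proof -
  define a where "a = r1 - r2"
  define b where "b = r2 - r3"
  define P where "P = d - yf"
  define Q where "Q = xf - c"
  have ab: "a*b < 0"
  proof (cases "\<omega>1 > 0")
    case True
    then have "\<omega>2 < 0" "\<omega>3 > 0" using assms(4-8) by (auto simp: sgn_if split: if_splits)
    then have "r1 > 0" "r2 < 0" "r3 > 0" using True assms(1-3) by (auto simp: r1_def r2_def r3_def divide_pos_neg)
    then show ?thesis by (simp add: a_def b_def mult_pos_neg)
  next
    case False
    then have "\<omega>1 < 0" "\<omega>2 > 0" "\<omega>3 < 0" using assms(4-8) by (auto simp: sgn_if split: if_splits)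
    then have "r1 < 0" "r2 > 0" "r3 < 0" using assms(1-3) by (auto simp: r1_def r2_def r3_def divide_pos_neg)
    then show ?thesis by (simp add: a_def b_def mult_neg_pos)
  qed
  have e1: "(r3 - r1)^2 = (a+b)^2" "((r1 - r2) - (r2 - r3))^2 = (a-b)^2" by (simp_all add: a_def b_def power2_commute)
  have e2: "(xf - c)^2 + (yf - d)^2 = P^2 + Q^2" by (simp add: P_def Q_def power2_commute)
  have reach: "reachable3 (v1, \<omega>1) (v2, \<omega>2) (v3, \<omega>3) (x0, y0, \<theta>0) (xf, yf, \<theta>f) \<longleftrightarrow>
     (\<exists>\<tau>1 \<tau>2 \<tau>3. admissible_dur (v1,\<omega>1) \<tau>1 \<and> admissible_dur (v2,\<omega>2) \<tau>2 \<and> admissible_dur (v3,\<omega>3) \<tau>3 \<and>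
       (let t1 = \<theta>0 + \<omega>1*\<tau>1; t2 = t1 + \<omega>2*\<tau>2; t3 = t2 + \<omega>3*\<tau>3 in
        x0 - r1*(sin \<theta>0 - sin t1) - r2*(sin t1 - sin t2) - r3*(sin t2 - sin t3) = xf \<and>
        y0 + r1*(cos \<theta>0 - cos t1) + r2*(cos t1 - cos t2) + r3*(cos t2 - cos t3) = yf \<and>
        (\<exists>k::int. t3 = \<theta>f + 2*pi*of_int k)))"
    unfolding reachable3_def using assms(4-6)
    by (simp add: motion_turn r1_def r2_def r3_def Let_def)
  have eqs: "(let t1 = \<theta>0 + \<omega>1*\<tau>1; t2 = t1 + \<omega>2*\<tau>2; t3 = t2 + \<omega>3*\<tau>3 in
        x0 - r1*(sin \<theta>0 - sin t1) - r2*(sin t1 - sin t2) - r3*(sin t2 - sin t3) = xf \<and>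
        y0 + r1*(cos \<theta>0 - cos t1) + r2*(cos t1 - cos t2) + r3*(cos t2 - cos t3) = yf \<and>
        (\<exists>k::int. t3 = \<theta>f + 2*pi*of_int k)) \<longleftrightarrow>
      (let t1 = \<theta>0 + \<omega>1*\<tau>1; t2 = t1 + \<omega>2*\<tau>2; t3 = t2 + \<omega>3*\<tau>3 in
        a*cos t1 + b*cos t2 = P \<and> a*sin t1 + b*sin t2 = Q \<and>
        (\<exists>k::int. t3 = \<theta>f + 2*pi*of_int k))" for \<tau>1 \<tau>2 \<tau>3
  proof -
    have X: "x0 - r1*(sin \<theta>0 - sin t1) - r2*(sin t1 - sin t2) - r3*(sin t2 - sin t3) = xf
       \<longleftrightarrow> a*sin t1 + b*sin t2 = Q" if "sin t3 = sin \<theta>f" for t1 t2 t3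
      unfolding a_def b_def Q_def c_def using that by (simp add: algebra_simps) linarith?
    have Y: "y0 + r1*(cos \<theta>0 - cos t1) + r2*(cos t1 - cos t2) + r3*(cos t2 - cos t3) = yf
       \<longleftrightarrow> a*cos t1 + b*cos t2 = P" if "cos t3 = cos \<theta>f" for t1 t2 t3
      unfolding a_def b_def P_def d_def using that by (simp add: algebra_simps) linarith?
    show ?thesis
    proof (cases "\<exists>k::int. \<theta>0 + \<omega>1*\<tau>1 + \<omega>2*\<tau>2 + \<omega>3*\<tau>3 = \<theta>f + 2*pi*of_int k")
      case True
      then obtain k::int where k: "\<theta>0 + \<omega>1*\<tau>1 + \<omega>2*\<tau>2 + \<omega>3*\<tau>3 = \<theta>f + 2*pi*of_int k" by blast
      have s: "sin (\<theta>0 + \<omega>1*\<tau>1 + \<omega>2*\<tau>2 + \<omega>3*\<tau>3) = sin \<theta>f"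
        and c: "cos (\<theta>0 + \<omega>1*\<tau>1 + \<omega>2*\<tau>2 + \<omega>3*\<tau>3) = cos \<theta>f"
        unfolding k using per by simp_all
      show ?thesis by (simp only: Let_def X[OF s] Y[OF c] True simp_thms) blast
    next
      case False
      then show ?thesis by (simp only: Let_def False simp_thms)
    qed
  qed
  show ?thesis
  proof
    assume "reachable3 (v1, \<omega>1) (v2, \<omega>2) (v3, \<omega>3) (x0, y0, \<theta>0) (xf, yf, \<theta>f)"
    then obtain t1 t2 where h: "a*cos t1 + b*cos t2 = P" "a*sin t1 + b*sin t2 = Q"
      unfolding reach eqs by (auto simp only: Let_def)
    have sc: "sin (t1-t2) ^2 + cos (t1-t2)^2 = 1" by simp
    have "P^2+Q^2 = a^2*((sin t1)^2 + (cos t1)^2) + b^2*((sin t2)^2 + (cos t2)^2) + 2*a*b*(cos t1 * cos t2 + sin t1 * sin t2)"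
      unfolding h[symmetric] by algebra
    also have "\<dots> = a^2 + b^2 + 2*a*b*cos (t1 - t2)" by (simp add: cos_diff)
    finally have PQ: "P^2+Q^2 = a^2 + b^2 + 2*a*b*cos (t1 - t2)" .
    have c1: "(a*b)*1 \<le> (a*b)*cos (t1-t2)" by (rule mult_left_mono_neg) (use ab in auto)
    have c2: "(a*b)*cos (t1-t2) \<le> (a*b)*(-1)" by (rule mult_left_mono_neg) (use ab in auto)
    show "(r3 - r1)^2 \<le> (xf - c)^2 + (yf - d)^2 \<and>
           (xf - c)^2 + (yf - d)^2 \<le> ((r1 - r2) - (r2 - r3))^2"
      unfolding e1 e2 PQ using c1 c2 by (simp add: power2_eq_square algebra_simps)
  next
    assume "(r3 - r1)^2 \<le> (xf - c)^2 + (yf - d)^2 \<and>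
           (xf - c)^2 + (yf - d)^2 \<le> ((r1 - r2) - (r2 - r3))^2"
    then obtain \<phi> \<psi> where h: "a*cos \<phi> + b*cos \<psi> = P" "a*sin \<phi> + b*sin \<psi> = Q"
      using exist_angles[OF ab] unfolding e1 e2 by blast
    obtain \<tau>1 k1 where k1: "\<tau>1 \<ge> 0" "\<bar>\<omega>1*\<tau>1\<bar> < 2*pi" "\<theta>0 + \<omega>1*\<tau>1 = \<phi> + 2*pi*of_int k1"
      using angle_reach[OF assms(4)] by blast
    obtain \<tau>2 k2 where k2: "\<tau>2 \<ge> 0" "\<bar>\<omega>2*\<tau>2\<bar> < 2*pi" "(\<theta>0 + \<omega>1*\<tau>1) + \<omega>2*\<tau>2 = \<psi> + 2*pi*of_int k2"
      using angle_reach[OF assms(5)] by blast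
    obtain \<tau>3 k3 where k3: "\<tau>3 \<ge> 0" "\<bar>\<omega>3*\<tau>3\<bar> < 2*pi" "((\<theta>0 + \<omega>1*\<tau>1) + \<omega>2*\<tau>2) + \<omega>3*\<tau>3 = \<theta>f + 2*pi*of_int k3"
      using angle_reach[OF assms(6)] by blast
    show "reachable3 (v1, \<omega>1) (v2, \<omega>2) (v3, \<omega>3) (x0, y0, \<theta>0) (xf, yf, \<theta>f)"
      unfolding reach eqs
      apply (rule exI[of _ \<tau>1], rule exI[of _ \<tau>2], rule exI[of _ \<tau>3])
      using k1 k2 k3 h per by (auto simp: admissible_dur_def Let_def)
  qed
qed

end
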